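(* There exists a $4$-colored tiling of $\mathbb{R}^3$ all of whose tiles have volume $1$ and whose minimal distance equals $(12+8\sqrt2)^{-1/3}\approx0.350$.
   Context: A $k$-colored tiling of $\mathbb{R}^3$ is a locally finite collection of closed bounded connected tiles covering $\mathbb{R}^3$, distinct tiles intersecting only in their boundaries, each tile assigned one of $k$ colors. The minimal distance is the infimum of the Euclidean distances $|x-y|$ over $x\in T_i$, $y\in T_j$ with $i\neq j$ and $T_i,T_j$ of the same color. *)

theory Defs
  imports "HOL-Analysis.Analysis"
begin

definition colored_tiling ::
  "nat \<Rightarrow> (real^3) set set \<Rightarrow> ((real^3) set \<Rightarrow> nat) \<Rightarrow> bool" where
  "colored_tiling k Tiles col \<longleftrightarrow>
     (\<forall>T\<in>Tiles. closed T \<and> bounded T \<and> connected T) \<and>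
     (\<forall>x::real^3. \<exists>e>0. finite {T\<in>Tiles. T \<inter> ball x e \<noteq> {}}) \<and>
     \<Union>Tiles = UNIV \<and>
     (\<forall>T\<in>Tiles. \<forall>T'\<in>Tiles. T \<noteq> T' \<longrightarrow> T \<inter> T' \<subseteq> frontier T \<inter> frontier T') \<and>
     (\<forall>T\<in>Tiles. col T < k)"

definition min_distance :: "(real^3) set set \<Rightarrow> ((real^3) set \<Rightarrow> nat) \<Rightarrow> real" where
  "min_distance Tiles col =
     Inf {dist x y | x y T T'. T \<in> Tiles \<and> T' \<in> Tiles \<and> T \<noteq> T' \<and> col T = col T' \<and>
                              x \<in> T \<and> y \<in> T'}"

end

theory Submission
  imports Defs
begin

definition cc :: real where "cc = (12 + 8 * sqrt 2) powr (-1/3)"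
definition s3 :: real where "s3 = 1 / (6 * cc^2)"

definition lo :: "int \<times> int \<times> int \<Rightarrow> real^3" where
  "lo p = (case p of (i,j,m) \<Rightarrow>
     vector [cc * of_int (2*i+j), cc * of_int j, s3 * of_int (3*m+i+2*j)])"
definition hi :: "int \<times> int \<times> int \<Rightarrow> real^3" where
  "hi p = (case p of (i,j,m) \<Rightarrow>
     vector [cc * of_int (2*i+j) + 2* cc, cc * of_int j + cc, s3 * of_int (3*m+i+2*j) + 3* s3])"
definition tile :: "int \<times> int \<times> int \<Rightarrow> (real^3) set" where
  "tile p = cbox (lo p) (hi p)"
definition colour :: "int \<times> int \<times> int \<Rightarrow> nat" where
  "colour p = (case p of (i,j,m) \<Rightarrow> nat ((3*m+i+2*j) mod 4))"
definition col :: "(real^3) set \<Rightarrow> nat" where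
  "col T = colour (SOME p. tile p = T)"

lemma prod_3: "prod f (UNIV::3 set) = f 1 * f 2 * f 3"
  unfolding UNIV_3 by (simp add: ac_simps)

lemma cc_pos: "cc > 0"
proof -
  have "(12 + 8 * sqrt 2::real) > 0" by (simp add: add_pos_nonneg)
  thus ?thesis unfolding cc_def by simp
qed

lemma cc3: "cc^3 = 1 / (12 + 8 * sqrt 2)"
proof -
  have pos: "(12 + 8 * sqrt 2::real) > 0" by (simp add: add_pos_nonneg)
  have "cc^3 = cc powr (real 3)" using cc_pos by (simp add: powr_realpow)
  also have "\<dots> = (12 + 8 * sqrt 2) powr (-1)" unfolding cc_def by (simp add: powr_powr)
  also have "\<dots> = 1 / (12 + 8 * sqrt 2)" using pos by (simp add: powr_minus_divide)
  finally show ?thesis .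
qed

lemma s3_pos: "s3 > 0" unfolding s3_def using cc_pos by simp

lemma cc_le_s3: "cc \<le> s3"
proof -
  have "6 * cc^3 \<le> 1" unfolding cc3
    by (simp add: field_simps add_pos_nonneg)
  hence "cc * (6 * cc^2) \<le> 1" by (simp add: power3_eq_cube power2_eq_square algebra_simps)
  thus ?thesis unfolding s3_def using cc_pos by (simp add: field_simps)
qed

lemma vol: "2* cc * cc * (3* s3) = 1"
  unfolding s3_def using cc_pos by (simp add: field_simps power2_eq_square)

lemma mem_tile:
  "x \<in> tile (i,j,m) \<longleftrightarrow>
    cc * of_int (2*i+j) \<le> x$1 \<and> x$1 \<le> cc * of_int (2*i+j) + 2* cc \<and>
    cc * of_int j \<le> x$2 \<and> x$2 \<le> cc * of_int j + cc \<and>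
    s3 * of_int (3*m+i+2*j) \<le> x$3 \<and> x$3 \<le> s3 * of_int (3*m+i+2*j) + 3* s3"
  unfolding tile_def lo_def hi_def mem_box_cart forall_3 by simp

lemma mem_box_tile:
  "x \<in> box (lo (i,j,m)) (hi (i,j,m)) \<longleftrightarrow>
    cc * of_int (2*i+j) < x$1 \<and> x$1 < cc * of_int (2*i+j) + 2* cc \<and>
    cc * of_int j < x$2 \<and> x$2 < cc * of_int j + cc \<and>
    s3 * of_int (3*m+i+2*j) < x$3 \<and> x$3 < s3 * of_int (3*m+i+2*j) + 3* s3"
  unfolding lo_def hi_def mem_box_cart forall_3 by simp

lemma int_sep:
  fixes i j m i' j' m' :: int
  assumes "(3*m+i+2*j) mod 4 = (3*m'+i'+2*j') mod 4" "(i,j,m) \<noteq> (i',j',m')"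
  shows "2 \<le> \<bar>j - j'\<bar> \<or> 4 \<le> \<bar>(3*m+i+2*j) - (3*m'+i'+2*j')\<bar> \<or> 3 \<le> \<bar>(2*i+j) - (2*i'+j')\<bar>"
proof (rule ccontr)
  assume n: "\<not> ?thesis"
  define t where "t = 3*m+i+2*j"
  define t' where "t' = 3*m'+i'+2*j'"
  have jj: "\<bar>j - j'\<bar> \<le> 1" and tt: "\<bar>t - t'\<bar> \<le> 3" and uu: "\<bar>(2*i+j) - (2*i'+j')\<bar> \<le> 2"
    using n unfolding t_def t'_def by auto
  have "t mod 4 = t' mod 4" using assms(1) unfolding t_def t'_def .
  with tt have teq: "t = t'" by presburger
  have ne: "i \<noteq> i' \<or> j \<noteq> j' \<or> m \<noteq> m'" using assms(2) by auto
  have "j' = j \<or> j' = j + 1 \<or> j = j' + 1" using jj by linarith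
  then show False
  proof (elim disjE)
    assume e: "j' = j"
    hence "\<bar>i - i'\<bar> \<le> 1" using uu by linarith
    moreover have "i - i' = 3*m' - 3*m" using teq e unfolding t_def t'_def by linarith
    ultimately have "i = i'" "m = m'" by presburger+
    thus False using ne e by simp
  next
    assume e: "j' = j + 1"
    hence "i - i' \<le> 1 \<and> i' - i \<le> 0" using uu by linarith
    moreover have "i - i' - 2 = 3*m' - 3*m" using teq e unfolding t_def t'_def by linarith
    ultimately show False by presburger
  next
    assume e: "j = j' + 1"
    hence "i' - i \<le> 1 \<and> i - i' \<le> 0" using uu by linarith
    moreover have "i' - i - 2 = 3*m - 3*m'" using teq e unfolding t_def t'_def by linarith
    ultimately show False by presburger
  qed
qed

lemma sepL:
  fixes k k' n :: int and s w g p q :: real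
  assumes "s > 0" "s * of_int k \<le> p" "p \<le> s * of_int k + w"
    "s * of_int k' \<le> q" "q \<le> s * of_int k' + w" "n \<le> \<bar>k - k'\<bar>" "w + g \<le> s * of_int n"
  shows "g \<le> \<bar>p - q\<bar>"
proof (cases "k \<le> k'")
  case True
  hence "n \<le> k' - k" using assms(6) by simp
  hence "s * of_int n \<le> s * of_int (k' - k)" using assms(1) by (simp add: mult_left_mono)
  thus ?thesis using assms by (simp add: algebra_simps)
next
  case False
  hence "n \<le> k - k'" using assms(6) by simp
  hence "s * of_int n \<le> s * of_int (k - k')" using assms(1) by (simp add: mult_left_mono)
  thus ?thesis using assms by (simp add: algebra_simps)
qed

lemma ltL:
  fixes k k' n :: int and s w x :: real
  assumes "s > 0" "s * of_int k < x" "x < s * of_int k + w" "s * of_int k' \<le> x" "x \<le> s * of_int k' + w"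
    "w = s * of_int n"
  shows "k < k' + n \<and> k' < k + n"
proof -
  have "s * of_int k < s * (of_int k' + of_int n)" "s * of_int k' < s * (of_int k + of_int n)"
    using assms by (simp_all add: algebra_simps)
  hence "of_int k < (of_int k' + of_int n :: real)" "of_int k' < (of_int k + of_int n :: real)"
    using assms(1) by (simp_all add: mult_less_cancel_left_pos)
  thus ?thesis by linarith
qed

lemma floor_box:
  fixes z s :: real and r n :: int
  assumes "s > 0" "n > 0" "k = \<lfloor>(z / s - of_int r) / of_int n\<rfloor>"
  shows "s * of_int (n*k + r) \<le> z \<and> z \<le> s * of_int (n*k + r) + s * of_int n"
proof -
  have a: "of_int k \<le> (z/s - of_int r) / of_int n" "(z/s - of_int r) / of_int n < of_int k + 1"
    using assms(3) by linarith+
  have b: "of_int (n*k + r) \<le> z/s" "z/s \<le> of_int (n*k+r) + of_int n"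
  proof -
    have np: "(of_int n::real) > 0" using assms(2) by simp
    from a(1) have "of_int k * of_int n \<le> z/s - of_int r" using np by (simp add: field_simps)
    thus "of_int (n*k + r) \<le> z/s" by (simp add: algebra_simps)
    from a(2) have "z/s - of_int r < (of_int k + 1) * of_int n" using np by (simp add: field_simps)
    thus "z/s \<le> of_int (n*k+r) + of_int n" by (simp add: algebra_simps)
  qed
  have "s * of_int (n*k + r) \<le> s * (z/s)" by (rule mult_left_mono[OF b(1)]) (use assms(1) in simp)
  moreover have "s * (z/s) \<le> s * (of_int (n*k+r) + of_int n)" by (rule mult_left_mono[OF b(2)]) (use assms(1) in simp)
  moreover have "s * (z/s) = z" using assms(1) by simp
  ultimately show ?thesis by (simp add: algebra_simps)
qed

lemma bndL:
  fixes k :: int and s w y R :: real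
  assumes "s > 0" "s * of_int k \<le> y" "y \<le> s * of_int k + w" "\<bar>y\<bar> \<le> R" "w \<ge> 0"
  shows "\<bar>of_int k\<bar> \<le> (R + w) / s"
proof -
  have "\<bar>s * of_int k\<bar> \<le> R + w" using assms by linarith
  hence "s * \<bar>of_int k\<bar> \<le> R + w" using assms(1) by (simp add: abs_mult)
  thus ?thesis using assms(1) by (simp add: field_simps)
qed

lemma lo_mem: "lo (i,j,m) \<in> tile (i,j,m)"
  unfolding mem_tile lo_def using cc_pos s3_pos by simp

lemma tile_inj: assumes "tile p = tile q" shows "p = q"
proof -
  obtain i j m where p: "p = (i,j,m)" by (cases p) auto
  obtain i' j' m' where q: "q = (i',j',m')" by (cases q) auto
  have A: "lo (i,j,m) \<in> tile (i',j',m')" using lo_mem assms p q by metis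
  have B: "lo (i',j',m') \<in> tile (i,j,m)" using lo_mem assms p q by metis
  have "cc * of_int (2*i'+j') \<le> cc * of_int (2*i+j)" "cc * of_int (2*i+j) \<le> cc * of_int (2*i'+j')"
    "cc * of_int j' \<le> cc * of_int j" "cc * of_int j \<le> cc * of_int j'"
    "s3 * of_int (3*m'+i'+2*j') \<le> s3 * of_int (3*m+i+2*j)" "s3 * of_int (3*m+i+2*j) \<le> s3 * of_int (3*m'+i'+2*j')"
    using A B unfolding mem_tile lo_def by (simp_all del: of_int_add of_int_mult)
  hence "2*i'+j' \<le> 2*i+j" "2*i+j \<le> 2*i'+j'" "j' \<le> j" "j \<le> j'"
    "3*m'+i'+2*j' \<le> 3*m+i+2*j" "3*m+i+2*j \<le> 3*m'+i'+2*j'"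
    using cc_pos s3_pos by (simp_all add: mult_le_cancel_left_pos del: of_int_add of_int_mult)
  hence "i = i'" "j = j'" "m = m'" by presburger+
  thus ?thesis using p q by simp
qed

lemma box_unique:
  assumes "x \<in> box (lo p) (hi p)" "x \<in> tile q" shows "p = q"
proof -
  obtain i j m where p: "p = (i,j,m)" by (cases p) auto
  obtain i' j' m' where q: "q = (i',j',m')" by (cases q) auto
  have A: "cc * of_int (2*i+j) < x$1 \<and> x$1 < cc * of_int (2*i+j) + 2 * cc \<and>
    cc * of_int j < x$2 \<and> x$2 < cc * of_int j + cc \<and>
    s3 * of_int (3*m+i+2*j) < x$3 \<and> x$3 < s3 * of_int (3*m+i+2*j) + 3 * s3"
    using assms(1) p mem_box_tile by simp
  have B: "cc * of_int (2*i'+j') \<le> x$1 \<and> x$1 \<le> cc * of_int (2*i'+j') + 2 * cc \<and>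
    cc * of_int j' \<le> x$2 \<and> x$2 \<le> cc * of_int j' + cc \<and>
    s3 * of_int (3*m'+i'+2*j') \<le> x$3 \<and> x$3 \<le> s3 * of_int (3*m'+i'+2*j') + 3 * s3"
    using assms(2) q mem_tile by simp
  have "2*i+j < 2*i'+j' + 2 \<and> 2*i'+j' < 2*i+j + 2"
    by (rule ltL[where s=cc and x="x$1" and w="2 * cc"]) (use A B cc_pos in auto)
  moreover have "j < j' + 1 \<and> j' < j + 1"
    by (rule ltL[where s=cc and x="x$2" and w="cc"]) (use A B cc_pos in auto)
  moreover have "3*m+i+2*j < 3*m'+i'+2*j' + 3 \<and> 3*m'+i'+2*j' < 3*m+i+2*j + 3"
    by (rule ltL[where s=s3 and x="x$3" and w="3 * s3"]) (use A B s3_pos in auto)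
  ultimately have "i = i'" "j = j'" "m = m'" by presburger+
  thus ?thesis using p q by simp
qed


lemma tile_closed: "closed (tile p) \<and> bounded (tile p) \<and> connected (tile p)"
  unfolding tile_def by (simp add: closed_cbox bounded_cbox is_interval_connected)

lemma tile_measure: "measure lebesgue (tile p) = 1"
proof -
  obtain i j m where p: "p = (i,j,m)" by (cases p) auto
  have ne: "tile p \<noteq> {}" using lo_mem p by blast
  have "measure lebesgue (tile p) = Henstock_Kurzweil_Integration.content (tile p)"
    unfolding tile_def by simp
  also have "\<dots> = prod (\<lambda>k. hi p $ k - lo p $ k) UNIV"
    using ne unfolding tile_def by (rule content_cbox_cart)
  also have "\<dots> = 2 * cc * cc * (3 * s3)"
    unfolding prod_3 p hi_def lo_def by simp
  also have "\<dots> = 1" by (rule vol)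
  finally show ?thesis .
qed

lemma tile_cover: "\<exists>p. y \<in> tile p"
proof -
  define j where "j = \<lfloor>(y$2 / cc - of_int (0::int)) / of_int (1::int)\<rfloor>"
  define i where "i = \<lfloor>(y$1 / cc - of_int j) / of_int (2::int)\<rfloor>"
  define m where "m = \<lfloor>(y$3 / s3 - of_int (i+2*j)) / of_int (3::int)\<rfloor>"
  have J: "cc * of_int (1*j + 0) \<le> y$2 \<and> y$2 \<le> cc * of_int (1*j+0) + cc * of_int (1::int)"
    by (rule floor_box) (use cc_pos j_def in auto)
  have I: "cc * of_int (2*i + j) \<le> y$1 \<and> y$1 \<le> cc * of_int (2*i+j) + cc * of_int (2::int)"
    by (rule floor_box) (use cc_pos i_def in auto)
  have M: "s3 * of_int (3*m + (i+2*j)) \<le> y$3 \<and> y$3 \<le> s3 * of_int (3*m+(i+2*j)) + s3 * of_int (3::int)"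
    by (rule floor_box) (use s3_pos m_def in auto)
  have e1: "cc * of_int (2::int) = 2 * cc" "cc * of_int (1::int) = cc" "s3 * of_int (3::int) = 3 * s3"
    "1*j + 0 = j" "3*m + (i+2*j) = 3*m+i+2*j" by simp_all
  have "y \<in> tile (i,j,m)" unfolding mem_tile using I J M unfolding e1 by linarith
  thus ?thesis by blast
qed

lemma tile_locfin: "finite {T\<in>range tile. T \<inter> ball x 1 \<noteq> {}}"
proof -
  define R where "R = norm x + 1"
  define N where "N = nat \<lceil>(R + 2 * cc) / cc + (R + cc) / cc + (R + 3 * s3) / s3\<rceil>"
  define g where "g = (\<lambda>(i::int,j::int,m::int). (2*i+j, j, 3*m+i+2*j))"
  have ginj: "inj g" unfolding g_def inj_def by auto
  have pos: "(R + 2 * cc) / cc \<ge> 0" "(R + cc) / cc \<ge> 0" "(R + 3 * s3) / s3 \<ge> 0"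
    unfolding R_def using cc_pos s3_pos by auto
  have sub: "{T\<in>range tile. T \<inter> ball x 1 \<noteq> {}} \<subseteq> tile ` (g -` ({-int N..int N} \<times> {-int N..int N} \<times> {-int N..int N}))"
  proof
    fix T assume TT: "T \<in> {T\<in>range tile. T \<inter> ball x 1 \<noteq> {}}"
    then obtain p where Tp: "T = tile p" by auto
    obtain i j m where pp: "p = (i,j,m)" by (cases p) auto
    have T: "T = tile (i,j,m)" using Tp pp by simp
    obtain y where y: "y \<in> tile (i,j,m)" "dist x y < 1" using TT T by auto
    have ny: "norm y \<le> R" unfolding R_def using y(2) norm_triangle_ineq2[of y x]
      by (simp add: dist_norm norm_minus_commute)
    have c: "\<bar>y$k\<bar> \<le> R" for k using component_le_norm_cart[of y k] ny by linarith
    have Y: "cc * of_int (2*i+j) \<le> y$1 \<and> y$1 \<le> cc * of_int (2*i+j) + 2 * cc \<and>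
      cc * of_int j \<le> y$2 \<and> y$2 \<le> cc * of_int j + cc \<and>
      s3 * of_int (3*m+i+2*j) \<le> y$3 \<and> y$3 \<le> s3 * of_int (3*m+i+2*j) + 3 * s3"
      using y(1) mem_tile by simp
    have b1: "\<bar>of_int (2*i+j)\<bar> \<le> (R + 2 * cc) / cc"
      by (rule bndL[where y="y$1"]) (use Y c[of 1] cc_pos in simp_all)
    have b2: "\<bar>of_int j\<bar> \<le> (R + cc) / cc"
      by (rule bndL[where y="y$2"]) (use Y c[of 2] cc_pos in simp_all)
    have b3: "\<bar>of_int (3*m+i+2*j)\<bar> \<le> (R + 3 * s3) / s3"
      by (rule bndL[where y="y$3"]) (use Y c[of 3] s3_pos in simp_all)
    have Nr: "(R + 2 * cc) / cc + (R + cc) / cc + (R + 3 * s3) / s3 \<le> real N"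
      unfolding N_def by linarith
    have "\<bar>of_int (2*i+j)\<bar> \<le> (of_int (int N)::real)" "\<bar>of_int j\<bar> \<le> (of_int (int N)::real)"
      "\<bar>of_int (3*m+i+2*j)\<bar> \<le> (of_int (int N)::real)"
      using b1 b2 b3 pos Nr by simp_all
    hence "\<bar>2*i+j\<bar> \<le> int N" "\<bar>j\<bar> \<le> int N" "\<bar>3*m+i+2*j\<bar> \<le> int N"
      by (simp_all only: of_int_abs[symmetric] of_int_le_iff)
    hence "(i,j,m) \<in> g -` ({-int N..int N} \<times> {-int N..int N} \<times> {-int N..int N})"
      unfolding g_def by auto
    thus "T \<in> tile ` (g -` ({-int N..int N} \<times> {-int N..int N} \<times> {-int N..int N}))" using T by blast
  qed
  show ?thesis
    by (rule finite_subset[OF sub]) (intro finite_imageI finite_vimageI ginj finite_SigmaI finite_atLeastAtMost_int)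
qed

lemma col_tile: "col (tile p) = colour p"
proof -
  have "tile (SOME q. tile q = tile p) = tile p" by (rule someI) (rule refl)
  hence "(SOME q. tile q = tile p) = p" by (rule tile_inj)
  thus ?thesis unfolding col_def by simp
qed

lemma tiles_frontier:
  assumes "T \<in> range tile" "T' \<in> range tile" "T \<noteq> T'"
  shows "T \<inter> T' \<subseteq> frontier T \<inter> frontier T'"
proof
  fix x assume x: "x \<in> T \<inter> T'"
  obtain p where p: "T = tile p" using assms(1) by auto
  obtain q where q: "T' = tile q" using assms(2) by auto
  have pq: "p \<noteq> q" using assms(3) p q by auto
  have "x \<notin> box (lo p) (hi p)" using box_unique[of x p q] x q pq by auto
  moreover have "x \<notin> box (lo q) (hi q)" using box_unique[of x q p] x p pq by auto
  ultimately show "x \<in> frontier T \<inter> frontier T'"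
    using x unfolding p q tile_def frontier_cbox by auto
qed

lemma dist_lower:
  assumes "x \<in> tile p" "y \<in> tile q" "p \<noteq> q" "colour p = colour q"
  shows "cc \<le> dist x y"
proof -
  obtain i j m where p: "p = (i,j,m)" by (cases p) auto
  obtain i' j' m' where q: "q = (i',j',m')" by (cases q) auto
  have md: "(3*m+i+2*j) mod 4 = (3*m'+i'+2*j') mod 4"
  proof -
    have "nat ((3*m+i+2*j) mod 4) = nat ((3*m'+i'+2*j') mod 4)" using assms(4) unfolding p q colour_def by simp
    hence "int (nat ((3*m+i+2*j) mod 4)) = int (nat ((3*m'+i'+2*j') mod 4))" by (rule arg_cong)
    thus ?thesis by (simp only: int_nat_eq pos_mod_sign zero_less_numeral if_True)
  qed
  have X: "cc * of_int (2*i+j) \<le> x$1 \<and> x$1 \<le> cc * of_int (2*i+j) + 2 * cc \<and>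
      cc * of_int j \<le> x$2 \<and> x$2 \<le> cc * of_int j + cc \<and>
      s3 * of_int (3*m+i+2*j) \<le> x$3 \<and> x$3 \<le> s3 * of_int (3*m+i+2*j) + 3 * s3"
    using assms(1) p mem_tile by simp
  have Y: "cc * of_int (2*i'+j') \<le> y$1 \<and> y$1 \<le> cc * of_int (2*i'+j') + 2 * cc \<and>
      cc * of_int j' \<le> y$2 \<and> y$2 \<le> cc * of_int j' + cc \<and>
      s3 * of_int (3*m'+i'+2*j') \<le> y$3 \<and> y$3 \<le> s3 * of_int (3*m'+i'+2*j') + 3 * s3"
    using assms(2) q mem_tile by simp
  have d: "\<bar>x$k - y$k\<bar> \<le> dist x y" for k
    using component_le_norm_cart[of "x - y" k] by (simp add: dist_norm)
  have "(i,j,m) \<noteq> (i',j',m')" using assms(3) p q by simp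
  from int_sep[OF md this]
  consider "2 \<le> \<bar>j - j'\<bar>" | "4 \<le> \<bar>(3*m+i+2*j) - (3*m'+i'+2*j')\<bar>" | "3 \<le> \<bar>(2*i+j) - (2*i'+j')\<bar>"
    by blast
  thus ?thesis
  proof cases
    case 1
    have "cc \<le> \<bar>x$2 - y$2\<bar>"
      by (rule sepL[where s=cc and w=cc and n=2]) (use X Y 1 cc_pos in simp_all)
    thus ?thesis using d[of 2] by linarith
  next
    case 2
    have "s3 \<le> \<bar>x$3 - y$3\<bar>"
      by (rule sepL[where s=s3 and w="3 * s3" and n=4]) (use X Y 2 s3_pos in simp_all)
    thus ?thesis using d[of 3] cc_le_s3 by linarith
  next
    case 3
    have "cc \<le> \<bar>x$1 - y$1\<bar>"
      by (rule sepL[where s=cc and w="2 * cc" and n=3]) (use X Y 3 cc_pos in simp_all)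
    thus ?thesis using d[of 1] by linarith
  qed
qed

theorem mainTheorem13:
  shows "\<exists>(Tiles :: (real^3) set set) (col :: (real^3) set \<Rightarrow> nat).
           colored_tiling 4 Tiles col \<and>
           (\<forall>T\<in>Tiles. measure lebesgue T = 1) \<and>
           min_distance Tiles col = (12 + 8 * sqrt 2) powr (-1/3)"
proof (intro exI conjI)
  show "colored_tiling 4 (range tile) col"
    unfolding colored_tiling_def
  proof (intro conjI)
    show "\<forall>T\<in>range tile. closed T \<and> bounded T \<and> connected T" using tile_closed by auto
    show "\<forall>x. \<exists>e>0. finite {T \<in> range tile. T \<inter> ball x e \<noteq> {}}"
      using tile_locfin by (intro allI exI[of _ 1]) auto
    show "\<Union> (range tile) = UNIV" using tile_cover by auto
    show "\<forall>T\<in>range tile. \<forall>T'\<in>range tile. T \<noteq> T' \<longrightarrow> T \<inter> T' \<subseteq> frontier T \<inter> frontier T'"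
      using tiles_frontier by blast
    show "\<forall>T\<in>range tile. col T < 4"
      by (auto simp: col_tile colour_def)
  qed
  show "\<forall>T\<in>range tile. measure lebesgue T = 1" using tile_measure by auto
  show "min_distance (range tile) col = (12 + 8 * sqrt 2) powr (-1/3)"
    unfolding min_distance_def cc_def[symmetric]
  proof (rule cInf_eq_minimum)
    define x :: "real^3" where "x = vector [0, 0, 0]"
    define y :: "real^3" where "y = vector [0, - cc, 0]"
    have xm: "x \<in> tile (0,0,0)" unfolding x_def mem_tile using cc_pos s3_pos by simp
    have ym: "y \<in> tile (1,-2,1)" unfolding y_def mem_tile using cc_pos s3_pos by simp
    have ne: "tile (0,0,0) \<noteq> tile (1,-2,1)"
    proof
      assume "tile (0,0,0) = tile (1,-2,1)"
      hence "((0::int),(0::int),(0::int)) = (1,-2,1)" by (rule tile_inj)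
      thus False by simp
    qed
    have cl: "col (tile (0,0,0)) = col (tile (1,-2,1))" by (simp add: col_tile colour_def)
    have dxy: "dist x y = cc"
      unfolding x_def y_def dist_vec_def L2_set_def sum_3 using cc_pos by simp
    show "cc \<in> {dist x y |x y T T'. T \<in> range tile \<and> T' \<in> range tile \<and> T \<noteq> T' \<and> col T = col T' \<and> x \<in> T \<and> y \<in> T'}"
      unfolding mem_Collect_eq
      apply (rule exI[of _ x]) apply (rule exI[of _ y])
      apply (rule exI[of _ "tile (0,0,0)"]) apply (rule exI[of _ "tile (1,-2,1)"])
      using xm ym ne cl dxy by simp
  next
    fix d assume "d \<in> {dist x y |x y T T'. T \<in> range tile \<and> T' \<in> range tile \<and> T \<noteq> T' \<and> col T = col T' \<and> x \<in> T \<and> y \<in> T'}"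
    then obtain x y T T' where H: "d = dist x y" "T \<in> range tile" "T' \<in> range tile" "T \<noteq> T'" "col T = col T'" "x \<in> T" "y \<in> T'"
      unfolding mem_Collect_eq by blast
    obtain p where p: "T = tile p" using H(2) by blast
    obtain q where q: "T' = tile q" using H(3) by blast
    have "p \<noteq> q" using H(4) p q by blast
    moreover have "colour p = colour q" using H(5) p q by (simp add: col_tile)
    ultimately show "cc \<le> d" using dist_lower[of x p y q] H(1,6,7) p q by simp
  qed
qed

end
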